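(* Let $n>2k$, $k\ge t+3$, and let $\mathcal F\subseteq\binom{[n]}{k}$ be a maximal $t$-intersecting family with $\tau_t(\mathcal F)=t+2$ and $\tau_t(\mathcal T_t(\mathcal F))=t$. If $|\mathcal T_t(\mathcal F)|=(k-t)(k-t+1)+1$, then: (i) $\mathcal F$ is a Type I family; (ii) $|\mathcal F|>((k-t)(k-t+1)+1)\binom{n-t-2}{k-t-2}-(k-t)(2(k-t)^2+1)\binom{n-t-3}{k-t-3}$.
   Context: A family is $t$-intersecting if any two members meet in at least $t$ elements. A $t$-cover of a family $\mathcal G$ (of subsets of $[n]$) is a set $S\subseteq[n]$ with $|S\cap G|\ge t$ for all $G\in\mathcal G$; $\tau_t(\mathcal G)$ is the minimum size of a $t$-cover, and $\mathcal T_t(\mathcal G)$ is the set of all $t$-covers of $\mathcal G$ of size $\tau_t(\mathcal G)$. A $t$-intersecting $\mathcal F\subseteq\binom{[n]}{k}$ is maximal if no $t$-intersecting subfamily of $\binom{[n]}{k}$ properly contains it. Type I family: choose $T,A\in\binom{[n]}{t}$ and $B,C\in\binom{[n]}{k-t}$ with $|T\cap A|=t-1$, $T\cap(B\cup C)=\emptyset$, and $A,B,C$ pairwise disjoint; choose $u\in C$; put $G_1=A\cup B$, $G_2=A\cup C$, $G_3=(T\cap A)\cup B\cup\{u\}$. The family is $\{F\in\binom{[n]}{k}: F\cap(A\cup T)=T,\ F\cap B\ne\emptyset,\ F\cap C\neq\emptyset\}\cup\{F\in\binom{[n]}{k}: A\cup T\subseteq F,\ F\cap(B\cup\{u\})\neq\emptyset\}\cup\{G_1,G_2,G_3\}$.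 *)

theory Defs
  imports Main
begin

definition k_sets :: "nat \<Rightarrow> nat \<Rightarrow> nat set set" where
  "k_sets n k = {A. A \<subseteq> {1..n} \<and> card A = k}"

definition t_intersecting :: "nat \<Rightarrow> nat set set \<Rightarrow> bool" where
  "t_intersecting t F \<longleftrightarrow> (\<forall>A\<in>F. \<forall>B\<in>F. t \<le> card (A \<inter> B))"

definition t_cover :: "nat \<Rightarrow> nat \<Rightarrow> nat set set \<Rightarrow> nat set \<Rightarrow> bool" where
  "t_cover n t G S \<longleftrightarrow> S \<subseteq> {1..n} \<and> (\<forall>X\<in>G. t \<le> card (S \<inter> X))"

definition tau_t :: "nat \<Rightarrow> nat \<Rightarrow> nat set set \<Rightarrow> nat" where
  "tau_t n t G = (LEAST s. \<exists>S. t_cover n t G S \<and> card S = s)"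

definition T_t :: "nat \<Rightarrow> nat \<Rightarrow> nat set set \<Rightarrow> nat set set" where
  "T_t n t G = {S. t_cover n t G S \<and> card S = tau_t n t G}"

definition maximal_t_intersecting :: "nat \<Rightarrow> nat \<Rightarrow> nat \<Rightarrow> nat set set \<Rightarrow> bool" where
  "maximal_t_intersecting n k t F \<longleftrightarrow>
     F \<subseteq> k_sets n k \<and> t_intersecting t F \<and>
     (\<forall>F'. F \<subset> F' \<and> F' \<subseteq> k_sets n k \<longrightarrow> \<not> t_intersecting t F')"

definition type_I :: "nat \<Rightarrow> nat \<Rightarrow> nat \<Rightarrow> nat set set \<Rightarrow> bool" where
  "type_I n k t F \<longleftrightarrow>
    (\<exists>T A B C u. T \<in> k_sets n t \<and> A \<in> k_sets n t \<and>
        B \<in> k_sets n (k - t) \<and> C \<in> k_sets n (k - t) \<and>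
        card (T \<inter> A) = t - 1 \<and> T \<inter> (B \<union> C) = {} \<and>
        A \<inter> B = {} \<and> A \<inter> C = {} \<and> B \<inter> C = {} \<and> u \<in> C \<and>
        F = {X \<in> k_sets n k. X \<inter> (A \<union> T) = T \<and> X \<inter> B \<noteq> {} \<and> X \<inter> C \<noteq> {}}
          \<union> {X \<in> k_sets n k. A \<union> T \<subseteq> X \<and> X \<inter> (B \<union> {u}) \<noteq> {}}
          \<union> {A \<union> B, A \<union> C, (T \<inter> A) \<union> B \<union> {u}})"

end

theory Submission
  imports Defs
begin

lemma count_sup:
  assumes "finite V" "D \<subseteq> V" "card D \<le> r"
  shows "card {Y. Y \<subseteq> V \<and> card Y = r \<and> D \<subseteq> Y} = (card V - card D) choose (r - card D)"
proof -
  have fD: "finite D" using assms finite_subset by blast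
  have eq: "{Y. Y \<subseteq> V \<and> card Y = r \<and> D \<subseteq> Y} = (\<lambda>Z. Z \<union> D) ` {Z. Z \<subseteq> V - D \<and> card Z = r - card D}"
  proof (intro equalityI subsetI)
    fix Y assume "Y \<in> {Y. Y \<subseteq> V \<and> card Y = r \<and> D \<subseteq> Y}"
    hence Y: "Y \<subseteq> V" "card Y = r" "D \<subseteq> Y" by auto
    have "finite Y" using Y(1) assms(1) finite_subset by blast
    hence "card (Y - D) = r - card D" using Y card_Diff_subset fD by auto
    moreover have "Y = (Y - D) \<union> D" using Y by auto
    ultimately show "Y \<in> (\<lambda>Z. Z \<union> D) ` {Z. Z \<subseteq> V - D \<and> card Z = r - card D}"
      using Y by blast
  next
    fix Y assume "Y \<in> (\<lambda>Z. Z \<union> D) ` {Z. Z \<subseteq> V - D \<and> card Z = r - card D}"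
    then obtain Z where Z: "Z \<subseteq> V - D" "card Z = r - card D" "Y = Z \<union> D" by auto
    have "finite Z" using Z(1) assms(1) finite_subset by blast
    hence "card Y = r" using Z fD assms(3) card_Un_disjoint[of Z D] by auto
    thus "Y \<in> {Y. Y \<subseteq> V \<and> card Y = r \<and> D \<subseteq> Y}" using Z assms(2) by auto
  qed
  have inj: "inj_on (\<lambda>Z. Z \<union> D) {Z. Z \<subseteq> V - D \<and> card Z = r - card D}"
    by (rule inj_onI) auto
  have "card {Y. Y \<subseteq> V \<and> card Y = r \<and> D \<subseteq> Y} = card {Z. Z \<subseteq> V - D \<and> card Z = r - card D}"
    unfolding eq using card_image[OF inj] .
  also have "\<dots> = card (V - D) choose (r - card D)"
    using n_subsets assms(1) by blast
  also have "card (V - D) = card V - card D" using card_Diff_subset fD assms(2) by blast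
  finally show ?thesis .
qed



lemma bonf:
  fixes P :: "'i \<Rightarrow> 'y \<Rightarrow> bool"
  assumes "finite I" "finite U"
  shows "int (card {Y\<in>U. \<exists>i\<in>I. P i Y}) \<ge>
     (\<Sum>i\<in>I. int (card {Y\<in>U. P i Y})) -
     (\<Sum>i\<in>I. \<Sum>j\<in>I - {i}. int (card {Y\<in>U. P i Y \<and> P j Y}))"
  using assms(1)
proof (induction I)
  case empty
  then show ?case by simp
next
  case (insert x I)
  define A where "A = {Y\<in>U. \<exists>i\<in>I. P i Y}"
  define B where "B = {Y\<in>U. P x Y}"
  define b where "b = (\<lambda>i j. int (card {Y\<in>U. P i Y \<and> P j Y}))"
  define a where "a = (\<lambda>i. int (card {Y\<in>U. P i Y}))"
  have un: "{Y\<in>U. \<exists>i\<in>insert x I. P i Y} = B \<union> A" unfolding A_def B_def by auto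
  have fA: "finite A" "finite B" using assms(2) unfolding A_def B_def by auto
  have c1: "card (B \<union> A) + card (B \<inter> A) = card B + card A"
    using card_Un_Int[OF fA(2) fA(1)] by simp
  have "B \<inter> A = (\<Union>j\<in>I. {Y\<in>U. P x Y \<and> P j Y})" unfolding A_def B_def by auto
  hence c2: "card (B \<inter> A) \<le> (\<Sum>j\<in>I. card {Y\<in>U. P x Y \<and> P j Y})"
    using card_UN_le[OF insert(1)] by simp
  have c2': "int (card (B \<inter> A)) \<le> (\<Sum>j\<in>I. b x j)"
  proof -
    have "int (card (B \<inter> A)) \<le> int (\<Sum>j\<in>I. card {Y\<in>U. P x Y \<and> P j Y})"
      using c2 by linarith
    also have "\<dots> = (\<Sum>j\<in>I. b x j)" unfolding b_def by (rule of_nat_sum)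
    finally show ?thesis .
  qed
  have s1: "(\<Sum>i\<in>insert x I. a i) = a x + (\<Sum>i\<in>I. a i)"
    using insert(1,2) by (rule sum.insert)
  have s2: "(\<Sum>i\<in>insert x I. \<Sum>j\<in>insert x I - {i}. b i j) =
      (\<Sum>j\<in>insert x I - {x}. b x j) + (\<Sum>i\<in>I. \<Sum>j\<in>insert x I - {i}. b i j)"
    using insert(1,2) by (rule sum.insert)
  have s2b: "insert x I - {x} = I" using insert(2) by blast
  have s3: "\<And>i. i \<in> I \<Longrightarrow> (\<Sum>j\<in>insert x I - {i}. b i j) = b i x + (\<Sum>j\<in>I - {i}. b i j)"
  proof -
    fix i assume "i \<in> I"
    hence e: "insert x I - {i} = insert x (I - {i})" and nx: "x \<notin> I - {i}" using insert(2) by auto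
    have "finite (I - {i})" using insert(1) by blast
    thus "(\<Sum>j\<in>insert x I - {i}. b i j) = b i x + (\<Sum>j\<in>I - {i}. b i j)"
      unfolding e using nx by (rule sum.insert)
  qed
  have s4: "(\<Sum>i\<in>I. \<Sum>j\<in>insert x I - {i}. b i j) = (\<Sum>i\<in>I. b i x) + (\<Sum>i\<in>I. \<Sum>j\<in>I - {i}. b i j)"
    using s3 by (simp add: sum.distrib)
  have nn: "(\<Sum>i\<in>I. b i x) \<ge> 0" unfolding b_def by (simp add: sum_nonneg)
  have IH: "int (card A) \<ge> (\<Sum>i\<in>I. a i) - (\<Sum>i\<in>I. \<Sum>j\<in>I - {i}. b i j)"
    using insert.IH unfolding A_def a_def b_def .
  have goal: "int (card (B \<union> A)) \<ge> (\<Sum>i\<in>insert x I. a i) - (\<Sum>i\<in>insert x I. \<Sum>j\<in>insert x I - {i}. b i j)"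
    unfolding s1 s2 s2b s4 using IH c1 c2' nn unfolding a_def B_def by linarith
  show ?case using goal unfolding un[symmetric] a_def b_def .
qed


lemma union_strict:
  assumes "finite I" "\<And>x. x \<in> I \<Longrightarrow> finite (S x)" "x0 \<in> I" "y0 \<in> I" "x0 \<noteq> y0"
    "e0 \<in> S x0" "e0 \<in> S y0"
  shows "card (\<Union>x\<in>I. S x) + 1 \<le> (\<Sum>x\<in>I. card (S x))"
proof -
  define R where "R = I - {x0, y0}"
  have fR: "finite R" using assms(1) unfolding R_def by blast
  have u: "(\<Union>x\<in>I. S x) = (S x0 \<union> S y0) \<union> (\<Union>x\<in>R. S x)" using assms(3,4) unfolding R_def by auto
  have h1: "card (\<Union>x\<in>I. S x) \<le> card (S x0 \<union> S y0) + card (\<Union>x\<in>R. S x)"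
    unfolding u by (rule card_Un_le)
  have h2: "card (\<Union>x\<in>R. S x) \<le> (\<Sum>x\<in>R. card (S x))"
    using card_UN_le fR by blast
  have f0: "finite (S x0)" "finite (S y0)" using assms(2,3,4) by auto
  have h3: "card (S x0 \<union> S y0) + card (S x0 \<inter> S y0) = card (S x0) + card (S y0)"
    using card_Un_Int[OF f0] by simp
  have "S x0 \<inter> S y0 \<noteq> {}" using assms(6,7) by blast
  hence h4: "card (S x0 \<inter> S y0) \<ge> 1" using f0 by (simp add: Suc_le_eq card_gt_0_iff)
  have h5: "(\<Sum>x\<in>I. card (S x)) = card (S x0) + (\<Sum>x\<in>I - {x0}. card (S x))"
    by (rule sum.remove[OF assms(1,3)])
  have h6: "(\<Sum>x\<in>I - {x0}. card (S x)) = card (S y0) + (\<Sum>x\<in>I - {x0} - {y0}. card (S x))"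
    by (rule sum.remove) (use assms in auto)
  have "I - {x0} - {y0} = R" unfolding R_def by blast
  hence h7: "(\<Sum>x\<in>I - {x0}. card (S x)) = card (S y0) + (\<Sum>x\<in>R. card (S x))" using h6 by simp
  show ?thesis using h1 h2 h3 h4 h5 h7 by linarith
qed



locale core =
  fixes X :: "'a set" and WW :: "'a set set" and m :: nat and E :: "'a set set"
  assumes finX: "finite X" and m3: "3 \<le> m"
  and Wsub: "\<And>W. W \<in> WW \<Longrightarrow> W \<subseteq> X" and Wcard: "\<And>W. W \<in> WW \<Longrightarrow> card W = Suc m"
  and Wint: "\<And>W1 W2. W1 \<in> WW \<Longrightarrow> W2 \<in> WW \<Longrightarrow> W1 \<inter> W2 \<noteq> {}"
  and miss: "\<And>x. x \<in> X \<Longrightarrow> \<exists>W\<in>WW. x \<notin> W"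
  and Xne: "X \<noteq> {}"
  and E_def: "E = {e. e \<subseteq> X \<and> card e = 2 \<and> (\<forall>W\<in>WW. e \<inter> W \<noteq> {})}"
  and cardE: "card E = m * (m + 1) + 1"
begin

definition star where "star x = {e\<in>E. x \<in> e}"

lemma finE: "finite E"
proof -
  have "E \<subseteq> Pow X" unfolding E_def by auto
  thus ?thesis using finX finite_subset by blast
qed

lemma finW: "W \<in> WW \<Longrightarrow> finite W"
  using Wsub finX finite_subset by blast

lemma edge_form: "e \<in> E \<Longrightarrow> \<exists>p q. e = {p,q} \<and> p \<noteq> q \<and> p \<in> X \<and> q \<in> X"
proof -
  assume "e \<in> E"
  hence e: "e \<subseteq> X" "card e = 2" unfolding E_def by auto
  then obtain p q where "e = {p,q}" "p \<noteq> q" unfolding card_2_iff by blast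
  thus ?thesis using e(1) by blast
qed

lemma edge_in: "e \<in> E \<Longrightarrow> W \<in> WW \<Longrightarrow> e \<inter> W \<noteq> {}"
  unfolding E_def by auto

lemma star_sub: "W \<in> WW \<Longrightarrow> x \<notin> W \<Longrightarrow> star x \<subseteq> (\<lambda>y. {x,y}) ` W"
proof
  fix e assume W: "W \<in> WW" "x \<notin> W" and e: "e \<in> star x"
  hence eE: "e \<in> E" and xe: "x \<in> e" unfolding star_def by auto
  obtain p q where pq: "e = {p,q}" "p \<noteq> q" using edge_form[OF eE] by blast
  have "e \<inter> W \<noteq> {}" using edge_in[OF eE W(1)] .
  then obtain y where "y \<in> e" "y \<in> W" by blast
  moreover have "y \<noteq> x" using W(2) \<open>y \<in> W\<close> by blast
  ultimately have "e = {x,y}" using pq xe by auto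
  thus "e \<in> (\<lambda>y. {x,y}) ` W" using \<open>y \<in> W\<close> by blast
qed

lemma finstar: "finite (star x)" using finE unfolding star_def by simp

lemma star_le: "card (star x) \<le> Suc m"
proof (cases "x \<in> X")
  case True
  then obtain W where W: "W \<in> WW" "x \<notin> W" using miss by blast
  have "card (star x) \<le> card ((\<lambda>y. {x,y}) ` W)"
    using star_sub[OF W] finW[OF W(1)] by (simp add: card_mono)
  also have "\<dots> \<le> card W" using card_image_le finW[OF W(1)] by blast
  finally show ?thesis using Wcard[OF W(1)] by simp
next
  case False
  have "\<forall>e\<in>E. e \<subseteq> X" by (simp add: E_def)
  hence "star x = {}" unfolding star_def using False by auto
  thus ?thesis by simp
qed

lemma star_full:
  assumes "card (star x) = Suc m" "W \<in> WW" "x \<notin> W"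
  shows "star x = (\<lambda>y. {x,y}) ` W"
proof -
  have fi: "finite ((\<lambda>y. {x,y}) ` W)" using finW[OF assms(2)] by simp
  have "card ((\<lambda>y. {x,y}) ` W) \<le> card W" using card_image_le finW[OF assms(2)] by blast
  hence "card ((\<lambda>y. {x,y}) ` W) \<le> Suc m" using Wcard[OF assms(2)] by simp
  moreover have "card (star x) \<le> card ((\<lambda>y. {x,y}) ` W)" using star_sub[OF assms(2,3)] fi card_mono by blast
  ultimately show ?thesis using card_subset_eq[OF fi star_sub[OF assms(2,3)]] assms(1) by simp
qed

lemma E_sub_pair:
  assumes "W1 \<in> WW" "W2 \<in> WW"
  shows "E \<subseteq> (\<lambda>(p,q). {p,q}) ` ((W1 - W2) \<times> (W2 - W1)) \<union> (\<Union>x\<in>W1 \<inter> W2. star x)"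
proof
  fix e assume eE: "e \<in> E"
  obtain p q where pq: "e = {p,q}" "p \<noteq> q" using edge_form[OF eE] by blast
  have c1: "e \<inter> W1 \<noteq> {}" "e \<inter> W2 \<noteq> {}" using edge_in[OF eE] assms by auto
  show "e \<in> (\<lambda>(p,q). {p,q}) ` ((W1 - W2) \<times> (W2 - W1)) \<union> (\<Union>x\<in>W1 \<inter> W2. star x)"
  proof (cases "e \<inter> (W1 \<inter> W2) = {}")
    case False
    then obtain x where "x \<in> e" "x \<in> W1 \<inter> W2" by blast
    thus ?thesis using eE unfolding star_def by blast
  next
    case True
    hence "(p \<in> W1 - W2 \<and> q \<in> W2 - W1) \<or> (q \<in> W1 - W2 \<and> p \<in> W2 - W1)"
      using c1 pq by auto
    thus ?thesis
    proof
      assume "p \<in> W1 - W2 \<and> q \<in> W2 - W1"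
      thus ?thesis using pq by blast
    next
      assume h: "q \<in> W1 - W2 \<and> p \<in> W2 - W1"
      have "e = {q,p}" using pq by auto
      thus ?thesis using h by blast
    qed
  qed
qed

lemma card_pairs: "finite A \<Longrightarrow> finite B \<Longrightarrow> card ((\<lambda>(p,q). {p,q}) ` (A \<times> B)) \<le> card A * card B"
proof -
  assume f: "finite A" "finite B"
  have "card ((\<lambda>(p,q). {p,q}) ` (A \<times> B)) \<le> card (A \<times> B)"
    by (rule card_image_le) (use f in simp)
  thus ?thesis by (simp add: card_cartesian_product)
qed

lemma inter_card:
  assumes "W1 \<in> WW" "W2 \<in> WW" "W1 \<noteq> W2"
  shows "card (W1 \<inter> W2) \<ge> 1" "card (W1 \<inter> W2) \<le> m"
    "card (W1 - W2) = Suc m - card (W1 \<inter> W2)" "card (W2 - W1) = Suc m - card (W1 \<inter> W2)"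
proof -
  have f: "finite W1" "finite W2" using finW assms by auto
  show "card (W1 \<inter> W2) \<ge> 1" using Wint[OF assms(1,2)] f by (simp add: Suc_le_eq card_gt_0_iff)
  show "card (W1 - W2) = Suc m - card (W1 \<inter> W2)"
  proof -
    have "W1 - W2 = W1 - (W1 \<inter> W2)" by blast
    thus ?thesis using card_Diff_subset[of "W1 \<inter> W2" W1] f Wcard[OF assms(1)] by simp
  qed
  show "card (W2 - W1) = Suc m - card (W1 \<inter> W2)"
  proof -
    have "W2 - W1 = W2 - (W1 \<inter> W2)" by blast
    thus ?thesis using card_Diff_subset[of "W1 \<inter> W2" W2] f Wcard[OF assms(2)] by simp
  qed
  show "card (W1 \<inter> W2) \<le> m"
  proof (rule ccontr)
    assume "\<not> card (W1 \<inter> W2) \<le> m"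
    hence "card (W1 \<inter> W2) \<ge> card W1" "card (W1 \<inter> W2) \<ge> card W2" using Wcard assms by auto
    hence "W1 \<inter> W2 = W1" "W1 \<inter> W2 = W2" using f card_seteq[of W1 "W1 \<inter> W2"] card_seteq[of W2 "W1 \<inter> W2"] by auto
    thus False using assms(3) by simp
  qed
qed

lemma main_bound:
  assumes "W1 \<in> WW" "W2 \<in> WW" "W1 \<noteq> W2"
  shows "card E \<le> (Suc m - card (W1 \<inter> W2)) * (Suc m - card (W1 \<inter> W2)) + card (\<Union>x\<in>W1 \<inter> W2. star x)"
proof -
  have f: "finite W1" "finite W2" using finW assms by auto
  have "card E \<le> card ((\<lambda>(p,q). {p,q}) ` ((W1 - W2) \<times> (W2 - W1)) \<union> (\<Union>x\<in>W1 \<inter> W2. star x))"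
    using E_sub_pair[OF assms(1,2)] f finstar by (intro card_mono) auto
  also have "\<dots> \<le> card ((\<lambda>(p,q). {p,q}) ` ((W1 - W2) \<times> (W2 - W1))) + card (\<Union>x\<in>W1 \<inter> W2. star x)"
    by (rule card_Un_le)
  also have "card ((\<lambda>(p,q). {p,q}) ` ((W1 - W2) \<times> (W2 - W1))) \<le> card (W1 - W2) * card (W2 - W1)"
    using f by (intro card_pairs) auto
  finally show ?thesis using inter_card[OF assms] by simp
qed

lemma arith1:
  fixes i M :: nat
  assumes "2 \<le> i" "i + 2 \<le> Suc M"
  shows "(Suc M - i) * (Suc M - i) + i * Suc M < M * (M + 1) + 1"
proof -
  define a where "a = i - 2"
  define b where "b = Suc M - i - 2"
  have i: "i = a + 2" using assms a_def by simp
  have j: "Suc M - i = b + 2" using assms b_def by simp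
  have M: "M = a + b + 3" using assms a_def b_def by simp
  have "(b + 2) * (b + 2) + (a + 2) * Suc (a + b + 3) < (a + b + 3) * (a + b + 3 + 1) + 1"
    by (simp add: algebra_simps)
  thus ?thesis unfolding j using i M by simp
qed

lemma i_cases:
  assumes "W1 \<in> WW" "W2 \<in> WW" "W1 \<noteq> W2"
  shows "card (W1 \<inter> W2) = 1 \<or> card (W1 \<inter> W2) = m"
proof (rule ccontr)
  assume c: "\<not> ?thesis"
  let ?i = "card (W1 \<inter> W2)"
  have i: "2 \<le> ?i" "?i + 2 \<le> Suc m" using inter_card[OF assms] c by auto
  have fI: "finite (W1 \<inter> W2)" using finW assms by auto
  have "card (\<Union>x\<in>W1 \<inter> W2. star x) \<le> (\<Sum>x\<in>W1 \<inter> W2. card (star x))"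
    using card_UN_le[OF fI] by blast
  also have "\<dots> \<le> (\<Sum>x\<in>W1 \<inter> W2. Suc m)" by (rule sum_mono) (rule star_le)
  also have "\<dots> = ?i * Suc m" by simp
  finally have "card E \<le> (Suc m - ?i) * (Suc m - ?i) + ?i * Suc m"
    using main_bound[OF assms] by linarith
  thus False using arith1[OF i] cardE by linarith
qed


lemma find_one: "\<exists>W1\<in>WW. \<exists>W2\<in>WW. card (W1 \<inter> W2) = 1"
proof -
  obtain x0 where "x0 \<in> X" using Xne by blast
  then obtain W0 where W0: "W0 \<in> WW" using miss by blast
  have "card W0 = Suc m" using Wcard[OF W0] .
  hence "W0 \<noteq> {}" by auto
  then obtain x where x: "x \<in> W0" by blast
  hence "x \<in> X" using Wsub[OF W0] by blast
  then obtain W2 where W2: "W2 \<in> WW" "x \<notin> W2" using miss by blast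
  have ne: "W0 \<noteq> W2" using x W2 by blast
  show ?thesis
  proof (cases "card (W0 \<inter> W2) = 1")
    case True thus ?thesis using W0 W2 by blast
  next
    case False
    hence cI: "card (W0 \<inter> W2) = m" using i_cases[OF W0 W2(1) ne] by blast
    define I where "I = W0 \<inter> W2"
    have fI: "finite I" unfolding I_def using finW[OF W0] by simp
    have cP: "card (W0 - W2) = 1" using inter_card(3)[OF W0 W2(1) ne] cI by simp
    then obtain p where Pp: "W0 - W2 = {p}" using card_1_singletonE by blast
    have bnd: "card E \<le> 1 + card (\<Union>x\<in>I. star x)"
      using main_bound[OF W0 W2(1) ne] cI unfolding I_def by simp
    have UN: "card (\<Union>x\<in>I. star x) \<le> (\<Sum>x\<in>I. card (star x))"
      using card_UN_le[OF fI] by blast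
    have full: "\<forall>y\<in>I. card (star y) = Suc m"
    proof (rule ccontr)
      assume "\<not> (\<forall>y\<in>I. card (star y) = Suc m)"
      then obtain y where y: "y \<in> I" "card (star y) \<le> m" using star_le le_Suc_eq by blast
      have "(\<Sum>x\<in>I. card (star x)) = card (star y) + (\<Sum>x\<in>I - {y}. card (star x))"
        by (rule sum.remove[OF fI y(1)])
      also have "(\<Sum>x\<in>I - {y}. card (star x)) \<le> (\<Sum>x\<in>I - {y}. Suc m)"
        by (rule sum_mono) (rule star_le)
      also have "(\<Sum>x\<in>I - {y}. Suc m) = (m - 1) * Suc m"
        using cI y(1) fI unfolding I_def by simp
      finally have "(\<Sum>x\<in>I. card (star x)) \<le> m + (m - 1) * Suc m" using y(2) by linarith
      moreover have "m + (m - 1) * Suc m + 1 = m * (m + 1)" using m3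
        by (cases m) (auto simp: algebra_simps)
      ultimately show False using bnd UN cardE by linarith
    qed
    have noedge: "\<forall>y\<in>I. \<forall>z\<in>I. y \<noteq> z \<longrightarrow> {y,z} \<notin> E"
    proof (intro ballI impI)
      fix y z assume yz: "y \<in> I" "z \<in> I" "y \<noteq> z"
      show "{y,z} \<notin> E"
      proof
        assume e: "{y,z} \<in> E"
        have "card (\<Union>x\<in>I. star x) + 1 \<le> (\<Sum>x\<in>I. card (star x))"
          by (rule union_strict[OF fI finstar yz(1,2,3), of "{y,z}"]) (use e in \<open>auto simp: star_def\<close>)
        also have "\<dots> \<le> (\<Sum>x\<in>I. Suc m)" by (rule sum_mono) (rule star_le)
        also have "\<dots> = m * Suc m" using cI unfolding I_def by simp
        finally show False using bnd cardE by simp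
      qed
    qed
    have "I \<noteq> {}" using cI m3 unfolding I_def by auto
    then obtain y where y: "y \<in> I" by blast
    hence "y \<in> X" unfolding I_def using Wsub[OF W0] by blast
    then obtain W3 where W3: "W3 \<in> WW" "y \<notin> W3" using miss by blast
    have sf: "star y = (\<lambda>z. {y,z}) ` W3" using star_full[OF _ W3] full y by blast
    have sub: "W0 \<inter> W3 \<subseteq> {p}"
    proof
      fix z assume z: "z \<in> W0 \<inter> W3"
      have "{y,z} \<in> E" using sf z unfolding star_def by blast
      moreover have "y \<noteq> z" using z W3 by blast
      ultimately have "z \<notin> I" using noedge y by blast
      thus "z \<in> {p}" using z Pp unfolding I_def by blast
    qed
    have "W0 \<inter> W3 \<noteq> {}" using Wint[OF W0 W3(1)] .
    hence "W0 \<inter> W3 = {p}" using sub by blast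
    thus ?thesis using W0 W3 by (metis is_singletonI is_singleton_altdef)
  qed
qed

end

lemma finish:
  assumes "P \<inter> Q = {}" "a \<notin> P" "a \<notin> Q" "card P = m" "card Q = m" "finite P" "finite Q"
   "W3 \<in> WW" "a \<notin> W3" "P \<subseteq> W3" "card W3 = Suc m" "W3 \<inter> insert a Q \<noteq> {}"
   "insert a P \<in> WW" "insert a Q \<in> WW"
   "\<forall>W\<in>WW. card W = Suc m \<and> finite W" "\<forall>W\<in>WW. P \<subseteq> W \<or> Q \<subseteq> W" "\<forall>W\<in>WW. a \<in> W \<or> W3 \<subseteq> W"
  shows "\<exists>u\<in>Q. WW = {insert a P, insert a Q, insert u P}"
proof -
  obtain u where u: "u \<in> W3" "u \<in> insert a Q" using assms(12) by blast
  have uQ: "u \<in> Q" using u assms(9) by auto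
  have uP: "u \<notin> P" using uQ assms(1) by blast
  have fW3: "finite W3" using assms(8,15) by blast
  have "insert u P \<subseteq> W3" using u assms(10) by blast
  moreover have "card (insert u P) = Suc m" using uP assms(4,6) by simp
  ultimately have W3eq: "W3 = insert u P" using card_seteq[OF fW3] assms(11) by (metis order_refl)
  have "WW \<subseteq> {insert a P, insert a Q, insert u P}"
  proof
    fix W assume W: "W \<in> WW"
    have cW: "card W = Suc m" "finite W" using W assms(15) by auto
    show "W \<in> {insert a P, insert a Q, insert u P}"
    proof (cases "a \<in> W")
      case True
      show ?thesis
      proof (cases "P \<subseteq> W")
        case True
        hence "insert a P \<subseteq> W" using \<open>a \<in> W\<close> by blast
        moreover have "card (insert a P) = Suc m" using assms(2,4,6) by simp
        ultimately have "insert a P = W" using card_seteq[OF cW(2)] cW(1) by (metis order_refl)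
        thus ?thesis by blast
      next
        case False
        hence "Q \<subseteq> W" using W assms(16) by blast
        hence "insert a Q \<subseteq> W" using \<open>a \<in> W\<close> by blast
        moreover have "card (insert a Q) = Suc m" using assms(3,5,7) by simp
        ultimately have "insert a Q = W" using card_seteq[OF cW(2)] cW(1) by (metis order_refl)
        thus ?thesis by blast
      qed
    next
      case False
      hence "W3 \<subseteq> W" using W assms(17) by blast
      hence "W3 = W" using card_seteq[OF cW(2)] cW(1) assms(11) by (metis order_refl)
      thus ?thesis using W3eq by blast
    qed
  qed
  moreover have "{insert a P, insert a Q, insert u P} \<subseteq> WW" using assms(8,13,14) W3eq by blast
  ultimately show ?thesis using uQ by blast
qed


context core begin

lemma core_main: "\<exists>a B C u. B \<subseteq> X \<and> C \<subseteq> X \<and> a \<in> X \<and> card B = m \<and> card C = m \<and> B \<inter> C = {} \<and>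
   a \<notin> B \<and> a \<notin> C \<and> u \<in> C \<and> WW = {insert a B, insert a C, insert u B}"
proof -
  obtain W1 W2 where W: "W1 \<in> WW" "W2 \<in> WW" "card (W1 \<inter> W2) = 1" using find_one by blast
  then obtain a where a: "W1 \<inter> W2 = {a}" using card_1_singletonE by blast
  have ne: "W1 \<noteq> W2" using W Wcard m3 by auto
  define P where "P = W1 - {a}"
  define Q where "Q = W2 - {a}"
  have fW: "finite W1" "finite W2" using finW W by auto
  have PQ: "P \<inter> Q = {}" "a \<notin> P" "a \<notin> Q" "finite P" "finite Q" unfolding P_def Q_def using a fW by auto
  have aW: "a \<in> W1" "a \<in> W2" using a by auto
  have cPQ: "card P = m" "card Q = m" unfolding P_def Q_def
    using card_Diff_singleton[OF aW(1)] card_Diff_singleton[OF aW(2)] Wcard W by auto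
  have W12: "W1 = insert a P" "W2 = insert a Q" unfolding P_def Q_def using a by auto
  have D12: "W1 - W2 = P" "W2 - W1 = Q" unfolding P_def Q_def using a by auto
  have aX: "a \<in> X" using a Wsub W by blast
  define PQi where "PQi = (\<lambda>(p,q). {p,q}) ` (P \<times> Q)"
  have fPQi: "finite PQi" unfolding PQi_def using PQ by simp
  have Esub: "E \<subseteq> PQi \<union> star a" using E_sub_pair[OF W(1,2)] unfolding a D12 PQi_def by simp
  have "card E \<le> card ((PQi \<inter> E) \<union> star a)"
    using Esub fPQi finstar by (intro card_mono) auto
  also have "\<dots> \<le> card (PQi \<inter> E) + card (star a)" by (rule card_Un_le)
  finally have c1: "card E \<le> card (PQi \<inter> E) + card (star a)" .
  have c2: "card (PQi \<inter> E) \<le> card PQi" using fPQi by (simp add: card_mono)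
  have c3: "card PQi \<le> m * m" unfolding PQi_def using card_pairs[OF PQ(4,5)] cPQ by simp
  have c4: "card (star a) \<le> Suc m" by (rule star_le)
  have mm: "m * (m + 1) + 1 = m * m + Suc m" by (simp add: algebra_simps)
  have "card (PQi \<inter> E) = card PQi" using c1 c2 c3 c4 cardE mm by linarith
  hence "PQi \<inter> E = PQi" using card_subset_eq[OF fPQi] by blast
  hence PQE: "\<forall>p\<in>P. \<forall>q\<in>Q. {p,q} \<in> E" unfolding PQi_def by blast
  have csa: "card (star a) = Suc m" using c1 c2 c3 c4 cardE mm by linarith
  obtain W3 where W3: "W3 \<in> WW" "a \<notin> W3" using miss aX by blast
  have sf: "star a = (\<lambda>z. {a,z}) ` W3" using star_full[OF csa W3] .
  have aE: "\<forall>y\<in>W3. {a,y} \<in> E" using sf unfolding star_def by blast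
  have cov1: "\<forall>W\<in>WW. P \<subseteq> W \<or> Q \<subseteq> W"
  proof (intro ballI)
    fix W assume W: "W \<in> WW"
    show "P \<subseteq> W \<or> Q \<subseteq> W"
    proof (rule ccontr)
      assume "\<not> (P \<subseteq> W \<or> Q \<subseteq> W)"
      then obtain p q where "p \<in> P" "p \<notin> W" "q \<in> Q" "q \<notin> W" by blast
      moreover have "{p,q} \<inter> W \<noteq> {}" using edge_in[OF _ W] PQE \<open>p \<in> P\<close> \<open>q \<in> Q\<close> by blast
      ultimately show False by blast
    qed
  qed
  have cov2: "\<forall>W\<in>WW. a \<in> W \<or> W3 \<subseteq> W"
  proof (intro ballI)
    fix W assume W: "W \<in> WW"
    show "a \<in> W \<or> W3 \<subseteq> W"
    proof (rule ccontr)
      assume "\<not> (a \<in> W \<or> W3 \<subseteq> W)"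
      then obtain y where "a \<notin> W" "y \<in> W3" "y \<notin> W" by blast
      moreover have "{a,y} \<inter> W \<noteq> {}" using edge_in[OF _ W] aE \<open>y \<in> W3\<close> by blast
      ultimately show False by blast
    qed
  qed
  have allW: "\<forall>W\<in>WW. card W = Suc m \<and> finite W" using Wcard finW by blast
  have PX: "P \<subseteq> X" "Q \<subseteq> X" using Wsub W W12 by auto
  have cW3: "card W3 = Suc m" using Wcard W3 by blast
  have i1: "W3 \<inter> insert a Q \<noteq> {}" using Wint[OF W3(1) W(2)] W12 by simp
  have i2: "W3 \<inter> insert a P \<noteq> {}" using Wint[OF W3(1) W(1)] W12 by simp
  consider "P \<subseteq> W3" | "Q \<subseteq> W3" using cov1 W3 by blast
  thus ?thesis
  proof cases
    case 1
    obtain u where "u \<in> Q" "WW = {insert a P, insert a Q, insert u P}"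
      using finish[OF PQ(1,2,3) cPQ PQ(4,5) W3 1 cW3 i1 W(1)[unfolded W12] W(2)[unfolded W12] allW cov1 cov2] by blast
    hence "P \<subseteq> X \<and> Q \<subseteq> X \<and> a \<in> X \<and> card P = m \<and> card Q = m \<and> P \<inter> Q = {} \<and>
      a \<notin> P \<and> a \<notin> Q \<and> u \<in> Q \<and> WW = {insert a P, insert a Q, insert u P}"
      using PX aX PQ cPQ by simp
    thus ?thesis by (intro exI)
  next
    case 2
    have cov1': "\<forall>W\<in>WW. Q \<subseteq> W \<or> P \<subseteq> W" using cov1 by blast
    have PQ': "Q \<inter> P = {}" using PQ by blast
    obtain u where "u \<in> P" "WW = {insert a Q, insert a P, insert u Q}"
      using finish[OF PQ' PQ(3,2) cPQ(2,1) PQ(5,4) W3 2 cW3 i2 W(2)[unfolded W12] W(1)[unfolded W12] allW cov1' cov2] by blast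
    hence "Q \<subseteq> X \<and> P \<subseteq> X \<and> a \<in> X \<and> card Q = m \<and> card P = m \<and> Q \<inter> P = {} \<and>
      a \<notin> Q \<and> a \<notin> P \<and> u \<in> P \<and> WW = {insert a Q, insert a P, insert u Q}"
      using PX aX PQ PQ' cPQ by simp
    thus ?thesis by (intro exI)
  qed
qed

end




lemma fam_gen:
  assumes fV: "finite V" and D0: "D0 \<subseteq> V" and S: "S \<subseteq> V - D0" and cV: "card V = N"
    and cD: "card D0 = d" and r: "d + 2 \<le> r"
  shows "int (card {Y. Y \<subseteq> V \<and> card Y = r \<and> D0 \<subseteq> Y \<and> Y \<inter> S \<noteq> {}}) \<ge>
     int (card S) * int ((N - d - 1) choose (r - d - 1)) -
     int (card S) * (int (card S) - 1) * int ((N - d - 2) choose (r - d - 2))"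
proof -
  define U where "U = {Y. Y \<subseteq> V \<and> card Y = r \<and> D0 \<subseteq> Y}"
  have fU: "finite U" unfolding U_def using fV by simp
  have fS: "finite S" using S fV finite_subset by blast
  have fD: "finite D0" using D0 fV finite_subset by blast
  have eq: "{Y. Y \<subseteq> V \<and> card Y = r \<and> D0 \<subseteq> Y \<and> Y \<inter> S \<noteq> {}} = {Y\<in>U. \<exists>s\<in>S. s \<in> Y}"
    unfolding U_def by blast
  have B: "int (card {Y\<in>U. \<exists>s\<in>S. s \<in> Y}) \<ge>
     (\<Sum>s\<in>S. int (card {Y\<in>U. s \<in> Y})) -
     (\<Sum>s\<in>S. \<Sum>s'\<in>S - {s}. int (card {Y\<in>U. s \<in> Y \<and> s' \<in> Y}))"
    by (rule bonf[OF fS fU])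
  have one: "\<And>s. s \<in> S \<Longrightarrow> int (card {Y\<in>U. s \<in> Y}) = int ((N - d - 1) choose (r - d - 1))"
  proof -
    fix s assume s: "s \<in> S"
    have e: "{Y\<in>U. s \<in> Y} = {Y. Y \<subseteq> V \<and> card Y = r \<and> insert s D0 \<subseteq> Y}" unfolding U_def by blast
    have c: "card (insert s D0) = d + 1" using s S cD fD by auto
    have "card {Y. Y \<subseteq> V \<and> card Y = r \<and> insert s D0 \<subseteq> Y} = (card V - card (insert s D0)) choose (r - card (insert s D0))"
      by (rule count_sup) (use fV D0 S s c r in auto)
    thus "int (card {Y\<in>U. s \<in> Y}) = int ((N - d - 1) choose (r - d - 1))" unfolding e c cV by simp
  qed
  have two: "\<And>s s'. s \<in> S \<Longrightarrow> s' \<in> S - {s} \<Longrightarrow> int (card {Y\<in>U. s \<in> Y \<and> s' \<in> Y}) = int ((N - d - 2) choose (r - d - 2))"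
  proof -
    fix s s' assume s: "s \<in> S" "s' \<in> S - {s}"
    have e: "{Y\<in>U. s \<in> Y \<and> s' \<in> Y} = {Y. Y \<subseteq> V \<and> card Y = r \<and> insert s (insert s' D0) \<subseteq> Y}" unfolding U_def by blast
    have n1: "s' \<notin> D0" "s \<notin> insert s' D0" using s S by auto
    have c: "card (insert s (insert s' D0)) = d + 2" using n1 cD fD by simp
    have "card {Y. Y \<subseteq> V \<and> card Y = r \<and> insert s (insert s' D0) \<subseteq> Y} =
        (card V - card (insert s (insert s' D0))) choose (r - card (insert s (insert s' D0)))"
      by (rule count_sup) (use fV D0 S s c r in auto)
    thus "int (card {Y\<in>U. s \<in> Y \<and> s' \<in> Y}) = int ((N - d - 2) choose (r - d - 2))" unfolding e c cV
      by (simp add: diff_diff_add)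
  qed
  have s1: "(\<Sum>s\<in>S. int (card {Y\<in>U. s \<in> Y})) = int (card S) * int ((N - d - 1) choose (r - d - 1))"
    using one by simp
  have s2: "(\<Sum>s\<in>S. \<Sum>s'\<in>S - {s}. int (card {Y\<in>U. s \<in> Y \<and> s' \<in> Y})) =
      (\<Sum>s\<in>S. (int (card S) - 1) * int ((N - d - 2) choose (r - d - 2)))"
  proof (rule sum.cong[OF refl])
    fix s assume s: "s \<in> S"
    have "(\<Sum>s'\<in>S - {s}. int (card {Y\<in>U. s \<in> Y \<and> s' \<in> Y})) = (\<Sum>s'\<in>S - {s}. int ((N - d - 2) choose (r - d - 2)))"
      using two[OF s] by simp
    also have "\<dots> = int (card (S - {s})) * int ((N - d - 2) choose (r - d - 2))" by simp
    also have "int (card (S - {s})) = int (card S) - 1" using s fS card_Diff_singleton card_gt_0_iff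
      by (metis One_nat_def empty_iff of_nat_1 of_nat_diff Suc_leI)
    finally show "(\<Sum>s'\<in>S - {s}. int (card {Y\<in>U. s \<in> Y \<and> s' \<in> Y})) = (int (card S) - 1) * int ((N - d - 2) choose (r - d - 2))" .
  qed
  have s3: "(\<Sum>s\<in>S. (int (card S) - 1) * int ((N - d - 2) choose (r - d - 2))) =
     int (card S) * (int (card S) - 1) * int ((N - d - 2) choose (r - d - 2))" by simp
  show ?thesis using B unfolding eq s1 s2 s3 .
qed


lemma count_main:
  assumes fV: "finite V" and BV: "B \<subseteq> V" and CV: "C \<subseteq> V" and BC: "B \<inter> C = {}"
    and cB: "card B = m" and cC: "card C = m" and u: "u \<in> C" and m3: "3 \<le> m" and cV: "card V = N"
  shows "int (card {Y. Y \<subseteq> V \<and> card Y = m \<and> Y \<inter> B \<noteq> {} \<and> Y \<inter> C \<noteq> {}})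
       + int (card {Y. Y \<subseteq> V \<and> card Y = m - 1 \<and> Y \<inter> insert u B \<noteq> {}})
     \<ge> int (m * m + m + 1) * int ((N - 1) choose (m - 2)) - int m * int (2 * m * m + 1) * int ((N - 2) choose (m - 3))"
proof -
  define A where "A = int ((N - 1) choose (m - 2))"
  define c where "c = int ((N - 2) choose (m - 3))"
  define b2 where "b2 = int ((N - 2) choose (m - 2))"
  define c3 where "c3 = int ((N - 3) choose (m - 3))"
  define M where "M = int m"
  have fB: "finite B" "finite C" using BV CV fV finite_subset by auto
  have uB: "u \<notin> B" using u BC by blast
  have cS: "card (insert u B) = m + 1" using uB fB cB by simp
  have F2: "int (card {Y. Y \<subseteq> V \<and> card Y = m - 1 \<and> {} \<subseteq> Y \<and> Y \<inter> insert u B \<noteq> {}}) \<ge>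
     int (card (insert u B)) * int ((N - 0 - 1) choose (m - 1 - 0 - 1)) -
     int (card (insert u B)) * (int (card (insert u B)) - 1) * int ((N - 0 - 2) choose (m - 1 - 0 - 2))"
    by (rule fam_gen[OF fV]) (use BV CV u cV m3 in auto)
  have F2': "int (card {Y. Y \<subseteq> V \<and> card Y = m - 1 \<and> Y \<inter> insert u B \<noteq> {}}) \<ge> (M + 1) * A - (M + 1) * M * c"
  proof -
    have e: "N - 0 - 1 = N - 1" "m - 1 - 0 - 1 = m - 2" "N - 0 - 2 = N - 2" "m - 1 - 0 - 2 = m - 3" by auto
    have e2: "{Y. Y \<subseteq> V \<and> card Y = m - 1 \<and> {} \<subseteq> Y \<and> Y \<inter> insert u B \<noteq> {}} = {Y. Y \<subseteq> V \<and> card Y = m - 1 \<and> Y \<inter> insert u B \<noteq> {}}" by blast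
    show ?thesis using F2 unfolding cS A_def c_def M_def e e2 by (simp add: add.commute)
  qed
  define U1 where "U1 = {Y. Y \<subseteq> V \<and> card Y = m \<and> Y \<inter> C \<noteq> {}}"
  have fU1: "finite U1" unfolding U1_def using fV by simp
  have eq1: "{Y. Y \<subseteq> V \<and> card Y = m \<and> Y \<inter> B \<noteq> {} \<and> Y \<inter> C \<noteq> {}} = {Y\<in>U1. \<exists>b\<in>B. b \<in> Y}"
    unfolding U1_def by blast
  have Bo: "int (card {Y\<in>U1. \<exists>b\<in>B. b \<in> Y}) \<ge>
     (\<Sum>b\<in>B. int (card {Y\<in>U1. b \<in> Y})) -
     (\<Sum>b\<in>B. \<Sum>b'\<in>B - {b}. int (card {Y\<in>U1. b \<in> Y \<and> b' \<in> Y}))"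
    by (rule bonf[OF fB(1) fU1])
  have one: "\<And>b. b \<in> B \<Longrightarrow> int (card {Y\<in>U1. b \<in> Y}) \<ge> M * b2 - M * (M - 1) * c3"
  proof -
    fix b assume b: "b \<in> B"
    have e: "{Y\<in>U1. b \<in> Y} = {Y. Y \<subseteq> V \<and> card Y = m \<and> {b} \<subseteq> Y \<and> Y \<inter> C \<noteq> {}}" unfolding U1_def by blast
    have "int (card {Y. Y \<subseteq> V \<and> card Y = m \<and> {b} \<subseteq> Y \<and> Y \<inter> C \<noteq> {}}) \<ge>
     int (card C) * int ((N - 1 - 1) choose (m - 1 - 1)) -
     int (card C) * (int (card C) - 1) * int ((N - 1 - 2) choose (m - 1 - 2))"
      by (rule fam_gen[OF fV]) (use BV CV b BC cV m3 in auto)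
    thus "int (card {Y\<in>U1. b \<in> Y}) \<ge> M * b2 - M * (M - 1) * c3"
    proof -
      have e3: "N - 1 - 1 = N - 2" "m - 1 - 1 = m - 2" "N - 1 - 2 = N - 3" "m - 1 - 2 = m - 3" by auto
      show ?thesis using \<open>int (card {Y. Y \<subseteq> V \<and> card Y = m \<and> {b} \<subseteq> Y \<and> Y \<inter> C \<noteq> {}}) \<ge> _\<close>
        unfolding e cC M_def b2_def c3_def e3 by simp
    qed
  qed
  have two: "\<And>b b'. b \<in> B \<Longrightarrow> b' \<in> B - {b} \<Longrightarrow> int (card {Y\<in>U1. b \<in> Y \<and> b' \<in> Y}) \<le> M * c3"
  proof -
    fix b b' assume b: "b \<in> B" "b' \<in> B - {b}"
    have sub: "{Y\<in>U1. b \<in> Y \<and> b' \<in> Y} \<subseteq> (\<Union>x\<in>C. {Y. Y \<subseteq> V \<and> card Y = m \<and> {b, b', x} \<subseteq> Y})"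
      unfolding U1_def by blast
    have "card {Y\<in>U1. b \<in> Y \<and> b' \<in> Y} \<le> card (\<Union>x\<in>C. {Y. Y \<subseteq> V \<and> card Y = m \<and> {b, b', x} \<subseteq> Y})"
      by (rule card_mono[OF _ sub]) (use fB(2) fV in simp)
    also have "\<dots> \<le> (\<Sum>x\<in>C. card {Y. Y \<subseteq> V \<and> card Y = m \<and> {b, b', x} \<subseteq> Y})"
      by (rule card_UN_le[OF fB(2)])
    also have "\<dots> = (\<Sum>x\<in>C. (N - 3) choose (m - 3))"
    proof (rule sum.cong[OF refl])
      fix x assume x: "x \<in> C"
      have nn: "b \<noteq> b'" "b \<noteq> x" "b' \<noteq> x" using b x BC by auto
      have cc: "card {b, b', x} = 3" using nn by simp
      have "card {Y. Y \<subseteq> V \<and> card Y = m \<and> {b, b', x} \<subseteq> Y} = (card V - card {b, b', x}) choose (m - card {b, b', x})"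
        by (rule count_sup) (use fV BV CV b x cc m3 in auto)
      thus "card {Y. Y \<subseteq> V \<and> card Y = m \<and> {b, b', x} \<subseteq> Y} = (N - 3) choose (m - 3)" unfolding cc cV .
    qed
    also have "\<dots> = m * ((N - 3) choose (m - 3))" using cC by simp
    finally show "int (card {Y\<in>U1. b \<in> Y \<and> b' \<in> Y}) \<le> M * c3" unfolding M_def c3_def
      by (metis of_nat_le_iff of_nat_mult)
  qed
  have S1: "(\<Sum>b\<in>B. int (card {Y\<in>U1. b \<in> Y})) \<ge> (\<Sum>b\<in>B. M * b2 - M * (M - 1) * c3)"
    by (rule sum_mono) (rule one)
  have S1': "(\<Sum>b\<in>B. M * b2 - M * (M - 1) * c3) = M * (M * b2 - M * (M - 1) * c3)"
    using cB M_def by simp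
  have S2: "(\<Sum>b\<in>B. \<Sum>b'\<in>B - {b}. int (card {Y\<in>U1. b \<in> Y \<and> b' \<in> Y})) \<le> (\<Sum>b\<in>B. \<Sum>b'\<in>B - {b}. M * c3)"
    by (intro sum_mono) (rule two)
  have S2': "(\<Sum>b\<in>B. \<Sum>b'\<in>B - {b}. M * c3) = M * ((M - 1) * (M * c3))"
  proof -
    have "\<And>b. b \<in> B \<Longrightarrow> (\<Sum>b'\<in>B - {b}. M * c3) = (M - 1) * (M * c3)"
    proof -
      fix b assume "b \<in> B"
      hence "card (B - {b}) = m - 1" using cB fB by simp
      moreover have "int (m - 1) = M - 1" using m3 M_def by simp
      ultimately show "(\<Sum>b'\<in>B - {b}. M * c3) = (M - 1) * (M * c3)" by simp
    qed
    hence "(\<Sum>b\<in>B. \<Sum>b'\<in>B - {b}. M * c3) = (\<Sum>b\<in>B. (M - 1) * (M * c3))" by (rule sum.cong[OF refl])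
    thus ?thesis using cB M_def by simp
  qed
  have F1: "int (card {Y. Y \<subseteq> V \<and> card Y = m \<and> Y \<inter> B \<noteq> {} \<and> Y \<inter> C \<noteq> {}}) \<ge>
      M * (M * b2 - M * (M - 1) * c3) - M * ((M - 1) * (M * c3))"
    unfolding eq1 using Bo S1 S1' S2 S2' by linarith
  have pas: "A = b2 + c"
  proof -
    have "card (B \<union> C) = m + m" using card_Un_disjoint[OF fB BC] cB cC by simp
    moreover have "card (B \<union> C) \<le> N" using card_mono[OF fV] BV CV cV by simp
    ultimately have "N \<ge> 6" using m3 by simp
    hence "N - 1 = Suc (N - 2)" by simp
    moreover have "m - 2 = Suc (m - 3)" using m3 by simp
    ultimately show ?thesis unfolding A_def b2_def c_def by simp
  qed
  have c3c: "c3 \<le> c" unfolding c3_def c_def by (simp add: binomial_right_mono)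
  have M3: "M \<ge> 3" using m3 M_def by simp
  have mono: "M * M * (M - 1) * c3 \<le> M * M * (M - 1) * c" using c3c M3 by (simp add: mult_left_mono)
  have key: "M * (M * b2 - M * (M - 1) * c3) - M * ((M - 1) * (M * c3)) + ((M + 1) * A - (M + 1) * M * c)
       = (M * M + M + 1) * A - M * (2 * M * M + 1) * c + 2 * (M * M * (M - 1) * c - M * M * (M - 1) * c3)"
    unfolding pas by (simp add: algebra_simps)
  have fin: "int (m * m + m + 1) * A - int m * int (2 * m * m + 1) * c = (M * M + M + 1) * A - M * (2 * M * M + 1) * c"
    unfolding M_def by (simp add: algebra_simps)
  define L where "L = M * (M * b2 - M * (M - 1) * c3) - M * ((M - 1) * (M * c3)) + ((M + 1) * A - (M + 1) * M * c)"
  have g1: "int (card {Y. Y \<subseteq> V \<and> card Y = m \<and> Y \<inter> B \<noteq> {} \<and> Y \<inter> C \<noteq> {}})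
       + int (card {Y. Y \<subseteq> V \<and> card Y = m - 1 \<and> Y \<inter> insert u B \<noteq> {}}) \<ge> L"
    unfolding L_def using F1 F2' by linarith
  have g2: "L \<ge> (M * M + M + 1) * A - M * (2 * M * M + 1) * c"
  proof -
    have y: "0 \<le> M * M * (M - 1) * c - M * M * (M - 1) * c3" using mono by simp
    have "\<And>x y::int. 0 \<le> y \<Longrightarrow> x \<le> x + 2 * y" by simp
    from this[OF y] show ?thesis unfolding L_def key .
  qed
  show ?thesis using g1 g2 fin unfolding A_def[symmetric] c_def[symmetric] by linarith
qed



lemma fam_eq:
 assumes "a \<notin> T" "B \<inter> T = {}" "C \<inter> T = {}" "u \<in> C" "z \<in> T"
 shows "((Y \<inter> (insert a (T - {z}) \<union> T) = T \<and> Y \<inter> B \<noteq> {} \<and> Y \<inter> C \<noteq> {}) \<or> (insert a (T - {z}) \<union> T \<subseteq> Y \<and> Y \<inter> (B \<union> {u}) \<noteq> {}))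
   \<longleftrightarrow> (T \<subseteq> Y \<and> (Y - T) \<inter> insert a B \<noteq> {} \<and> (Y - T) \<inter> insert a C \<noteq> {} \<and> (Y - T) \<inter> insert u B \<noteq> {})"
proof -
  have e: "insert a (T - {z}) \<union> T = insert a T" using assms(5) by blast
  show ?thesis unfolding e using assms(1-4) by blast
qed



lemma tau_lb:
  assumes "tau_t n t G = s" "t_cover n t G S"
  shows "s \<le> card S"
  using assms unfolding tau_t_def by (metis (mono_tags, lifting) Least_le)

lemma tau_ex:
  assumes "tau_t n t G = s" "t_cover n t G S0"
  shows "\<exists>S. t_cover n t G S \<and> card S = s"
proof -
  have "\<exists>s. \<exists>S. t_cover n t G S \<and> card S = s" using assms(2) by blast
  from LeastI_ex[OF this] show ?thesis using assms(1) unfolding tau_t_def by blast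
qed

lemma inter_split:
  assumes "finite S" "T \<subseteq> S" "finite G" "card (T \<inter> G) = t - 1" "1 \<le> t"
  shows "t \<le> card (S \<inter> G) \<longleftrightarrow> (S - T) \<inter> G \<noteq> {}"
proof
  assume h: "t \<le> card (S \<inter> G)"
  show "(S - T) \<inter> G \<noteq> {}"
  proof
    assume "(S - T) \<inter> G = {}"
    hence "S \<inter> G \<subseteq> T \<inter> G" using assms(2) by blast
    hence "card (S \<inter> G) \<le> card (T \<inter> G)" using assms(3) by (simp add: card_mono)
    thus False using h assms(4,5) by linarith
  qed
next
  assume "(S - T) \<inter> G \<noteq> {}"
  then obtain x where x: "x \<in> S" "x \<notin> T" "x \<in> G" by blast
  have "insert x (T \<inter> G) \<subseteq> S \<inter> G" using x assms(2) by blast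
  hence "card (insert x (T \<inter> G)) \<le> card (S \<inter> G)" using assms(1) by (simp add: card_mono)
  moreover have "card (insert x (T \<inter> G)) = Suc (t - 1)"
    using x assms(3,4) by simp
  ultimately show "t \<le> card (S \<inter> G)" using assms(5) by simp
qed

lemma dist_helper: "(P1 \<or> P2 \<longleftrightarrow> Q) \<Longrightarrow> ((K \<and> P1 \<or> K \<and> P2) \<longleftrightarrow> (K \<and> Q))"
  by blast

theorem lemma2p3:
  fixes n k t :: nat and F :: "nat set set"
  assumes "n > 2 * k" and "k \<ge> t + 3"
    and "maximal_t_intersecting n k t F"
    and "tau_t n t F = t + 2"
    and "tau_t n t (T_t n t F) = t"
    and "card (T_t n t F) = (k - t) * (k - t + 1) + 1"
  shows "type_I n k t F \<and>
    int (card F) > int ((k - t) * (k - t + 1) + 1) * int ((n - t - 2) choose (k - t - 2))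
                   - int (k - t) * int (2 * (k - t)^2 + 1) * int ((n - t - 3) choose (k - t - 3))"
proof -
  define m where "m = k - t"
  have m3: "3 \<le> m" using assms(2) by (simp add: m_def)
  have km: "k = t + m" using assms(2) m_def by simp
  have FK: "F \<subseteq> k_sets n k" and Fint: "t_intersecting t F"
    and Fmax: "\<And>F'. F \<subset> F' \<Longrightarrow> F' \<subseteq> k_sets n k \<Longrightarrow> \<not> t_intersecting t F'"
    using assms(3) unfolding maximal_t_intersecting_def by auto
  have Fs: "\<And>G. G \<in> F \<Longrightarrow> G \<subseteq> {1..n} \<and> card G = k \<and> finite G"
    using FK unfolding k_sets_def by (auto intro: finite_subset)
  have Fi: "\<And>G H. G \<in> F \<Longrightarrow> H \<in> F \<Longrightarrow> t \<le> card (G \<inter> H)"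
    using Fint unfolding t_intersecting_def by blast
  define Tt where "Tt = T_t n t F"
  have cTt: "card Tt = m * (m + 1) + 1" using assms(6) unfolding m_def Tt_def by simp
  have fTt: "finite Tt" using cTt card_ge_0_finite by force
  have Ttne: "Tt \<noteq> {}" using cTt by force
  have TtD: "\<And>S. S \<in> Tt \<Longrightarrow> t_cover n t F S \<and> card S = t + 2"
    unfolding Tt_def T_t_def using assms(4) by simp
  have TtI: "\<And>S. t_cover n t F S \<Longrightarrow> card S = t + 2 \<Longrightarrow> S \<in> Tt"
    unfolding Tt_def T_t_def using assms(4) by simp
  have lb: "\<And>S. t_cover n t F S \<Longrightarrow> t + 2 \<le> card S" using tau_lb[OF assms(4)] by blast
  have Sfin: "\<And>S. S \<in> Tt \<Longrightarrow> S \<subseteq> {1..n} \<and> finite S"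
    using TtD unfolding t_cover_def by (auto intro: finite_subset)
  have t1: "1 \<le> t"
  proof (rule ccontr)
    assume "\<not> 1 \<le> t"
    hence "t = 0" by simp
    hence "t_cover n t F {}" unfolding t_cover_def by simp
    thus False using lb by fastforce
  qed
  have cov_all: "t_cover n t Tt {1..n}"
    unfolding t_cover_def
  proof (intro conjI ballI)
    fix S assume S: "S \<in> Tt"
    have "{1..n} \<inter> S = S" using Sfin[OF S] by blast
    thus "t \<le> card ({1..n} \<inter> S)" using TtD[OF S] by simp
  qed simp
  obtain T where Tc: "t_cover n t Tt T" and cT: "card T = t"
    using tau_ex[OF assms(5)[folded Tt_def] cov_all] by blast
  have Tn: "T \<subseteq> {1..n}" using Tc unfolding t_cover_def by blast
  have fT: "finite T" using Tn finite_subset by blast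
  have TS: "\<And>S. S \<in> Tt \<Longrightarrow> T \<subseteq> S"
  proof -
    fix S assume S: "S \<in> Tt"
    have "t \<le> card (T \<inter> S)" using Tc S unfolding t_cover_def by blast
    moreover have "card (T \<inter> S) \<le> card T" using fT by (simp add: card_mono)
    ultimately have "card (T \<inter> S) = card T" using cT by simp
    hence "T \<inter> S = T" using card_subset_eq[OF fT] by blast
    thus "T \<subseteq> S" by blast
  qed
  have cST: "\<And>S. S \<in> Tt \<Longrightarrow> card (S - T) = 2"
    using TS TtD cT fT by (simp add: card_Diff_subset)
  define X where "X = {1..n} - T"
  have fX: "finite X" unfolding X_def by simp
  have cX: "card X = n - t" unfolding X_def using Tn cT fT by (simp add: card_Diff_subset)
  define F' where "F' = {G\<in>F. \<not> T \<subseteq> G}"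
  have GT: "\<And>G. G \<in> F' \<Longrightarrow> card (G \<inter> T) = t - 1"
  proof -
    fix G assume G: "G \<in> F'"
    have GF: "G \<in> F" and nT: "\<not> T \<subseteq> G" using G unfolding F'_def by auto
    have fG: "finite G" "card G = k" using Fs[OF GF] by auto
    have "G \<inter> T \<subset> T" using nT by blast
    hence lt: "card (G \<inter> T) < t" using psubset_card_mono[OF fT] cT by metis
    obtain S0 where S0: "S0 \<in> Tt" using Ttne by blast
    have "t \<le> card (S0 \<inter> G)" using TtD[OF S0] GF unfolding t_cover_def by blast
    moreover have "S0 \<inter> G \<subseteq> (G \<inter> T) \<union> (S0 - T)" by blast
    hence "card (S0 \<inter> G) \<le> card ((G \<inter> T) \<union> (S0 - T))" using fG Sfin[OF S0] by (intro card_mono) auto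
    moreover have "card ((G \<inter> T) \<union> (S0 - T)) \<le> card (G \<inter> T) + card (S0 - T)" by (rule card_Un_le)
    ultimately have ge: "t \<le> card (G \<inter> T) + 2" using cST[OF S0] by linarith
    show "card (G \<inter> T) = t - 1"
    proof (rule ccontr)
      assume "card (G \<inter> T) \<noteq> t - 1"
      hence eq: "card (G \<inter> T) + 2 = t" using lt ge by linarith
      have sub: "\<And>S. S \<in> Tt \<Longrightarrow> S - T \<subseteq> G - T"
      proof (rule ccontr)
        fix S assume S: "S \<in> Tt" and "\<not> S - T \<subseteq> G - T"
        then obtain x where x: "x \<in> S - T" "x \<notin> G" by blast
        have "t \<le> card (S \<inter> G)" using TtD[OF S] GF unfolding t_cover_def by blast
        moreover have "S \<inter> G \<subseteq> (G \<inter> T) \<union> ((S - T) - {x})" using x by blast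
        hence "card (S \<inter> G) \<le> card ((G \<inter> T) \<union> ((S - T) - {x}))" using fG Sfin[OF S] by (intro card_mono) auto
        moreover have "card ((G \<inter> T) \<union> ((S - T) - {x})) \<le> card (G \<inter> T) + card ((S - T) - {x})" by (rule card_Un_le)
        moreover have "card ((S - T) - {x}) = 1" using cST[OF S] x(1) Sfin[OF S] by simp
        ultimately show False using eq by linarith
      qed
      define D where "D = G - T"
      have fD: "finite D" unfolding D_def using fG by simp
      have cD: "card D = m + 2" unfolding D_def using card_Diff_subset_Int[of G T] fG eq km
        by (simp add: Int_commute)
      have inj: "inj_on (\<lambda>S. S - T) Tt"
      proof (rule inj_onI)
        fix S1 S2 assume "S1 \<in> Tt" "S2 \<in> Tt" "S1 - T = S2 - T"
        thus "S1 = S2" using TS by blast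
      qed
      have "(\<lambda>S. S - T) ` Tt \<subseteq> {e. e \<subseteq> D \<and> card e = 2}" using sub cST unfolding D_def by auto
      hence "card ((\<lambda>S. S - T) ` Tt) \<le> card {e. e \<subseteq> D \<and> card e = 2}"
        using fD by (intro card_mono) auto
      also have "\<dots> = (m + 2) choose 2" using n_subsets[OF fD] cD by simp
      also have "\<dots> = (m + 2) * (m + 1) div 2" by (simp add: choose_two)
      finally have "m * (m + 1) + 1 \<le> (m + 2) * (m + 1) div 2" using card_image[OF inj] cTt by simp
      moreover have "\<And>x y::nat. x \<le> y div 2 \<Longrightarrow> 2 * x \<le> y" by presburger
      ultimately have "2 * (m * (m + 1) + 1) \<le> (m + 2) * (m + 1)" by blast
      hence "m * m \<le> m" by (simp add: algebra_simps)
      moreover have "3 * m \<le> m * m" using m3 by simp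
      ultimately show False using m3 by linarith
    qed
  qed
  have F'F: "\<And>G. G \<in> F' \<Longrightarrow> G \<in> F" unfolding F'_def by blast
  have GTc: "\<And>G. G \<in> F' \<Longrightarrow> card (T \<inter> G) = t - 1" using GT by (simp add: Int_commute)
  define WW where "WW = (\<lambda>G. G - T) ` F'"
  have Wsub: "\<And>W. W \<in> WW \<Longrightarrow> W \<subseteq> X" unfolding WW_def X_def F'_def using Fs by blast
  have Wcard: "\<And>W. W \<in> WW \<Longrightarrow> card W = Suc m"
  proof -
    fix W assume "W \<in> WW"
    then obtain G where G: "G \<in> F'" "W = G - T" unfolding WW_def by blast
    have "finite (G \<inter> T)" using Fs[OF F'F[OF G(1)]] by blast
    hence "card (G - T) = card G - card (G \<inter> T)" by (rule card_Diff_subset_Int)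
    thus "card W = Suc m" using G GT[OF G(1)] Fs[OF F'F[OF G(1)]] km t1 by simp
  qed
  have Wint: "\<And>W1 W2. W1 \<in> WW \<Longrightarrow> W2 \<in> WW \<Longrightarrow> W1 \<inter> W2 \<noteq> {}"
  proof -
    fix W1 W2 assume "W1 \<in> WW" "W2 \<in> WW"
    then obtain G1 G2 where G: "G1 \<in> F'" "G2 \<in> F'" "W1 = G1 - T" "W2 = G2 - T" unfolding WW_def by blast
    show "W1 \<inter> W2 \<noteq> {}"
    proof
      assume e: "W1 \<inter> W2 = {}"
      have "G1 \<inter> G2 \<subseteq> G1 \<inter> T" using e G by blast
      hence "card (G1 \<inter> G2) \<le> card (G1 \<inter> T)" using Fs[OF F'F[OF G(1)]] by (intro card_mono) auto
      moreover have "t \<le> card (G1 \<inter> G2)" using Fi F'F G by blast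
      ultimately show False using GT[OF G(1)] t1 by linarith
    qed
  qed
  have miss: "\<And>x. x \<in> X \<Longrightarrow> \<exists>W\<in>WW. x \<notin> W"
  proof -
    fix x assume x: "x \<in> X"
    have "card (insert x T) = t + 1" using x fT cT unfolding X_def by simp
    hence "\<not> t_cover n t F (insert x T)" using lb by fastforce
    moreover have "insert x T \<subseteq> {1..n}" using x Tn unfolding X_def by blast
    ultimately obtain G where G: "G \<in> F" "card (insert x T \<inter> G) < t" unfolding t_cover_def by force
    have fG: "finite G" using Fs[OF G(1)] by blast
    have nT: "\<not> T \<subseteq> G"
    proof
      assume "T \<subseteq> G"
      hence "T \<subseteq> insert x T \<inter> G" by blast
      hence "card T \<le> card (insert x T \<inter> G)" using fG by (intro card_mono) auto
      thus False using G cT by simp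
    qed
    hence GF': "G \<in> F'" unfolding F'_def using G by blast
    have "x \<notin> G"
    proof
      assume xG: "x \<in> G"
      have "insert x T \<inter> G = insert x (T \<inter> G)" using xG by blast
      moreover have "x \<notin> T" using x unfolding X_def by blast
      ultimately have "card (insert x T \<inter> G) = Suc (card (T \<inter> G))" using fT by simp
      thus False using G GTc[OF GF'] t1 by simp
    qed
    thus "\<exists>W\<in>WW. x \<notin> W" using GF' unfolding WW_def by blast
  qed
  have Xne: "X \<noteq> {}" using cX assms(1,2) by auto
  define E where "E = {e. e \<subseteq> X \<and> card e = 2 \<and> (\<forall>W\<in>WW. e \<inter> W \<noteq> {})}"
  have toE: "\<And>S. S \<in> Tt \<Longrightarrow> S - T \<in> E"
  proof -
    fix S assume S: "S \<in> Tt"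
    have "S - T \<subseteq> X" using Sfin[OF S] unfolding X_def by blast
    moreover have "\<forall>W\<in>WW. (S - T) \<inter> W \<noteq> {}"
    proof
      fix W assume "W \<in> WW"
      then obtain G where G: "G \<in> F'" "W = G - T" unfolding WW_def by blast
      have "t \<le> card (S \<inter> G)" using TtD[OF S] F'F[OF G(1)] unfolding t_cover_def by blast
      hence "(S - T) \<inter> G \<noteq> {}"
        using inter_split[of S T G t] Sfin[OF S] TS[OF S] Fs[OF F'F[OF G(1)]] GTc[OF G(1)] t1 by blast
      thus "(S - T) \<inter> W \<noteq> {}" using G by blast
    qed
    ultimately show "S - T \<in> E" unfolding E_def using cST[OF S] by blast
  qed
  have fromE: "\<And>e. e \<in> E \<Longrightarrow> T \<union> e \<in> Tt"
  proof -
    fix e assume e: "e \<in> E"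
    have eX: "e \<subseteq> X" "card e = 2" and eW: "\<forall>W\<in>WW. e \<inter> W \<noteq> {}" using e unfolding E_def by auto
    have fe: "finite e" using eX fX finite_subset by blast
    have dis: "T \<inter> e = {}" using eX unfolding X_def by blast
    have c: "card (T \<union> e) = t + 2" using card_Un_disjoint[OF fT fe dis] cT eX by simp
    have sub: "T \<union> e \<subseteq> {1..n}" using Tn eX unfolding X_def by blast
    have "t_cover n t F (T \<union> e)"
      unfolding t_cover_def
    proof (intro conjI ballI sub)
      fix G assume GF: "G \<in> F"
      have fG: "finite G" using Fs[OF GF] by blast
      show "t \<le> card ((T \<union> e) \<inter> G)"
      proof (cases "T \<subseteq> G")
        case True
        hence "T \<subseteq> (T \<union> e) \<inter> G" by blast
        hence "card T \<le> card ((T \<union> e) \<inter> G)" using fG by (intro card_mono) auto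
        thus ?thesis using cT by simp
      next
        case False
        hence GF': "G \<in> F'" unfolding F'_def using GF by blast
        have "e \<inter> (G - T) \<noteq> {}" using eW GF' unfolding WW_def by blast
        hence "(T \<union> e - T) \<inter> G \<noteq> {}" by blast
        moreover have "finite (T \<union> e)" "T \<subseteq> T \<union> e" using fT fe by auto
        ultimately show ?thesis using inter_split[OF _ _ fG GTc[OF GF'] t1] by blast
      qed
    qed
    thus "T \<union> e \<in> Tt" using TtI c by blast
  qed
  have imgE: "(\<lambda>S. S - T) ` Tt = E"
  proof
    show "(\<lambda>S. S - T) ` Tt \<subseteq> E" using toE by blast
    show "E \<subseteq> (\<lambda>S. S - T) ` Tt"
    proof
      fix e assume e: "e \<in> E"
      have "e = (T \<union> e) - T" using e unfolding E_def X_def by blast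
      thus "e \<in> (\<lambda>S. S - T) ` Tt" using fromE[OF e] by blast
    qed
  qed
  have injT: "inj_on (\<lambda>S. S - T) Tt"
  proof (rule inj_onI)
    fix S1 S2 assume "S1 \<in> Tt" "S2 \<in> Tt" "S1 - T = S2 - T"
    thus "S1 = S2" using TS by blast
  qed
  have cE: "card E = m * (m + 1) + 1" using card_image[OF injT] imgE cTt by simp
  interpret core X WW m E
    by (unfold_locales) (use fX m3 Wsub Wcard Wint miss Xne E_def cE in auto)
  obtain a B C u where abc: "B \<subseteq> X" "C \<subseteq> X" "a \<in> X" "card B = m" "card C = m" "B \<inter> C = {}"
    "a \<notin> B" "a \<notin> C" "u \<in> C" "WW = {insert a B, insert a C, insert u B}"
    using core_main by blast
  have aT: "a \<notin> T" "B \<inter> T = {}" "C \<inter> T = {}" "u \<notin> T" using abc unfolding X_def by auto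
  define W1 where "W1 = insert a B"
  define W2 where "W2 = insert a C"
  define W3 where "W3 = insert u B"
  have WWe: "WW = {W1, W2, W3}" using abc(10) unfolding W1_def W2_def W3_def .
  have W12: "W1 \<inter> W2 = {a}" unfolding W1_def W2_def using abc by blast
  have W23: "W2 \<inter> W3 = {u}" unfolding W2_def W3_def using abc by blast
  have Bne: "B \<noteq> {}" using abc(4) m3 by auto
  have Wne: "W1 \<noteq> W2" "W1 \<noteq> W3" "W2 \<noteq> W3"
  proof -
    show "W1 \<noteq> W2"
    proof
      assume "W1 = W2"
      moreover have "B = W1 - {a}" unfolding W1_def using abc(7) by blast
      moreover have "C = W2 - {a}" unfolding W2_def using abc(8) by blast
      ultimately have "B = C" by simp
      thus False using abc(6) Bne by blast
    qed
    have "a \<noteq> u" using abc(8,9) by blast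
    thus "W1 \<noteq> W3" "W2 \<noteq> W3" unfolding W1_def W2_def W3_def using abc(7) by auto
  qed
  have zeq: "\<And>G H. G \<in> F' \<Longrightarrow> H \<in> F' \<Longrightarrow> card ((G - T) \<inter> (H - T)) \<le> 1 \<Longrightarrow> T - G = T - H"
  proof -
    fix G H assume G: "G \<in> F'" and H: "H \<in> F'" and c1: "card ((G - T) \<inter> (H - T)) \<le> 1"
    have fG: "finite G" "finite H" using Fs F'F G H by auto
    have cTG: "card (T - G) = 1" using card_Diff_subset_Int[of T G] fT GTc[OF G] cT t1 by simp
    have cTH: "card (T - H) = 1" using card_Diff_subset_Int[of T H] fT GTc[OF H] cT t1 by simp
    obtain zG where zG: "T - G = {zG}" using cTG card_1_singletonE by blast
    obtain zH where zH: "T - H = {zH}" using cTH card_1_singletonE by blast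
    show "T - G = T - H"
    proof (rule ccontr)
      assume ne: "T - G \<noteq> T - H"
      hence zz: "zG \<noteq> zH" "zG \<in> T" "zH \<in> T" using zG zH by auto
      have "G \<inter> H \<subseteq> (T - {zG, zH}) \<union> ((G - T) \<inter> (H - T))" using zG zH by blast
      hence "card (G \<inter> H) \<le> card ((T - {zG, zH}) \<union> ((G - T) \<inter> (H - T)))" using fT fG by (intro card_mono) auto
      also have "\<dots> \<le> card (T - {zG, zH}) + card ((G - T) \<inter> (H - T))" by (rule card_Un_le)
      also have "card (T - {zG, zH}) = t - 2" using zz fT cT by (simp add: card_Diff_subset)
      finally have "card (G \<inter> H) \<le> t - 2 + 1" using c1 by linarith
      moreover have "t \<le> card (G \<inter> H)" using Fi F'F G H by blast
      moreover have "2 \<le> t"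
      proof -
        have "{zG, zH} \<subseteq> T" using zz by blast
        hence "card {zG, zH} \<le> card T" using fT by (rule card_mono[rotated])
        thus ?thesis using zz cT by simp
      qed
      ultimately show False by linarith
    qed
  qed
  have "W1 \<in> WW" "W2 \<in> WW" "W3 \<in> WW" using WWe by auto
  then obtain G1 G2 G3 where G1: "G1 \<in> F'" "G1 - T = W1" and G2: "G2 \<in> F'" "G2 - T = W2"
    and G3: "G3 \<in> F'" "G3 - T = W3" unfolding WW_def by blast
  have c12: "T - G1 = T - G2" using zeq[OF G1(1) G2(1)] G1 G2 W12 by simp
  have c23: "T - G2 = T - G3" using zeq[OF G2(1) G3(1)] G2 G3 W23 by simp
  have cTG1: "card (T - G1) = 1" using card_Diff_subset_Int[of T G1] fT GTc[OF G1(1)] cT t1 by simp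
  obtain z where z: "T - G1 = {z}" using cTG1 card_1_singletonE by blast
  have zT: "z \<in> T" using z by blast
  have allz: "\<And>G. G \<in> F' \<Longrightarrow> T - G = {z}"
  proof -
    fix G assume G: "G \<in> F'"
    have "G - T \<in> WW" using G unfolding WW_def by blast
    hence "G - T = W1 \<or> G - T = W2 \<or> G - T = W3" using WWe by blast
    thus "T - G = {z}"
    proof (elim disjE)
      assume "G - T = W1"
      thus ?thesis using zeq[OF G G2(1)] G2 W12 c12 z by simp
    next
      assume "G - T = W2"
      thus ?thesis using zeq[OF G G1(1)] G1 W12 z by (simp add: Int_commute)
    next
      assume "G - T = W3"
      thus ?thesis using zeq[OF G G2(1)] G2 W23 c12 z by (simp add: Int_commute)
    qed
  qed
  have Gform: "\<And>G. G \<in> F' \<Longrightarrow> G = (T - {z}) \<union> (G - T)"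
    using allz by blast
  define Tz where "Tz = T - {z}"
  have F'eq: "F' = {Tz \<union> W1, Tz \<union> W2, Tz \<union> W3}"
  proof
    show "F' \<subseteq> {Tz \<union> W1, Tz \<union> W2, Tz \<union> W3}"
    proof
      fix G assume G: "G \<in> F'"
      have "G - T \<in> WW" using G unfolding WW_def by blast
      thus "G \<in> {Tz \<union> W1, Tz \<union> W2, Tz \<union> W3}" using Gform[OF G] WWe unfolding Tz_def by auto
    qed
    show "{Tz \<union> W1, Tz \<union> W2, Tz \<union> W3} \<subseteq> F'"
    proof -
      have "G1 = Tz \<union> W1" "G2 = Tz \<union> W2" "G3 = Tz \<union> W3"
        using Gform[OF G1(1)] Gform[OF G2(1)] Gform[OF G3(1)] G1(2) G2(2) G3(2) unfolding Tz_def by auto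
      thus ?thesis using G1(1) G2(1) G3(1) by simp
    qed
  qed
  define F2 where "F2 = {Y \<in> k_sets n k. T \<subseteq> Y \<and> (Y - T) \<inter> W1 \<noteq> {} \<and> (Y - T) \<inter> W2 \<noteq> {} \<and> (Y - T) \<inter> W3 \<noteq> {}}"
  have F2eq: "{G\<in>F. T \<subseteq> G} = F2"
  proof
    show "{G\<in>F. T \<subseteq> G} \<subseteq> F2"
    proof
      fix G assume G: "G \<in> {G\<in>F. T \<subseteq> G}"
      hence GF: "G \<in> F" and TG: "T \<subseteq> G" by auto
      have fG: "finite G" using Fs GF by blast
      have meet: "\<And>H. H \<in> F' \<Longrightarrow> (G - T) \<inter> (H - T) \<noteq> {}"
      proof -
        fix H assume H: "H \<in> F'"
        have "t \<le> card (G \<inter> H)" using Fi GF F'F[OF H] by blast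
        moreover have fH: "finite H" using Fs[OF F'F[OF H]] by blast
        ultimately have "(G - T) \<inter> H \<noteq> {}"
          using inter_split[OF fG TG fH GTc[OF H] t1] by blast
        thus "(G - T) \<inter> (H - T) \<noteq> {}" by blast
      qed
      have GK: "G \<in> k_sets n k" using GF FK by blast
      have m1: "(G - T) \<inter> W1 \<noteq> {}" using meet[OF G1(1)] unfolding G1(2) .
      have m2: "(G - T) \<inter> W2 \<noteq> {}" using meet[OF G2(1)] unfolding G2(2) .
      have m3': "(G - T) \<inter> W3 \<noteq> {}" using meet[OF G3(1)] unfolding G3(2) .
      show "G \<in> F2" unfolding F2_def using GK TG m1 m2 m3' by blast
    qed
    show "F2 \<subseteq> {G\<in>F. T \<subseteq> G}"
    proof
      fix Y assume Y: "Y \<in> F2"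
      have YK: "Y \<in> k_sets n k" and TY: "T \<subseteq> Y" and Y1: "(Y - T) \<inter> W1 \<noteq> {}"
        and Y2: "(Y - T) \<inter> W2 \<noteq> {}" and Y3: "(Y - T) \<inter> W3 \<noteq> {}" using Y unfolding F2_def by blast+
      have YW: "\<forall>W\<in>WW. (Y - T) \<inter> W \<noteq> {}" unfolding WWe using Y1 Y2 Y3 by blast
      have fY: "finite Y" "card Y = k" using YK unfolding k_sets_def by (auto intro: finite_subset)
      have YH: "\<And>H. H \<in> F \<Longrightarrow> t \<le> card (Y \<inter> H)"
      proof -
        fix H assume HF: "H \<in> F"
        have fH: "finite H" using Fs HF by blast
        show "t \<le> card (Y \<inter> H)"
        proof (cases "T \<subseteq> H")
          case True
          hence "T \<subseteq> Y \<inter> H" using TY by blast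
          hence "card T \<le> card (Y \<inter> H)" using fY by (intro card_mono) auto
          thus ?thesis using cT by simp
        next
          case False
          hence H': "H \<in> F'" unfolding F'_def using HF by blast
          hence HW: "H - T \<in> WW" unfolding WW_def by blast
          have "(Y - T) \<inter> (H - T) \<noteq> {}" using bspec[OF YW HW] .
          then obtain x where "x \<in> Y - T" "x \<in> H" by blast
          hence "(Y - T) \<inter> H \<noteq> {}" by blast
          thus ?thesis using inter_split[OF fY(1) TY fH GTc[OF H'] t1] by blast
        qed
      qed
      show "Y \<in> {G\<in>F. T \<subseteq> G}"
      proof (rule ccontr)
        assume "Y \<notin> {G\<in>F. T \<subseteq> G}"
        hence YF: "Y \<notin> F" using TY by blast
        have "F \<subset> insert Y F" using YF by blast
        moreover have "insert Y F \<subseteq> k_sets n k" using FK YK by blast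
        moreover have "t_intersecting t (insert Y F)"
          unfolding t_intersecting_def
        proof (intro ballI)
          fix A1 A2 assume A: "A1 \<in> insert Y F" "A2 \<in> insert Y F"
          show "t \<le> card (A1 \<inter> A2)"
          proof (cases "A1 = Y")
            case True
            show ?thesis
            proof (cases "A2 = Y")
              case True
              thus ?thesis using \<open>A1 = Y\<close> fY km by simp
            next
              case False
              hence "A2 \<in> F" using A by blast
              thus ?thesis using \<open>A1 = Y\<close> YH by blast
            qed
          next
            case False
            hence A1F: "A1 \<in> F" using A by blast
            show ?thesis
            proof (cases "A2 = Y")
              case True
              thus ?thesis using A1F YH by (simp add: Int_commute)
            next
              case False
              hence "A2 \<in> F" using A by blast
              thus ?thesis using A1F Fi by blast
            qed
          qed
        qed
        ultimately show False using Fmax by blast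
      qed
    qed
  qed
  have Fdec: "F = F2 \<union> F'" using F2eq unfolding F'_def by blast
  define A where "A = insert a Tz"
  have TA: "T \<inter> A = Tz" unfolding A_def Tz_def using aT by blast
  have AT: "A \<union> T = insert a T" unfolding A_def Tz_def using zT by blast
  have typeI: "type_I n k t F"
    unfolding type_I_def
  proof (intro exI conjI)
    show "T \<in> k_sets n t" unfolding k_sets_def using Tn cT by simp
    have cTz: "card Tz = t - 1" unfolding Tz_def using zT fT cT by simp
    show "A \<in> k_sets n t" unfolding k_sets_def A_def using Tn abc(3) aT cTz fT t1
      unfolding X_def Tz_def by auto
    show "B \<in> k_sets n (k - t)" unfolding k_sets_def using abc m_def unfolding X_def by auto
    show "C \<in> k_sets n (k - t)" unfolding k_sets_def using abc m_def unfolding X_def by auto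
    show "card (T \<inter> A) = t - 1" unfolding TA using cTz .
    show "T \<inter> (B \<union> C) = {}" using aT by blast
    show "A \<inter> B = {}" unfolding A_def Tz_def using aT abc by blast
    show "A \<inter> C = {}" unfolding A_def Tz_def using aT abc by blast
    show "B \<inter> C = {}" using abc by blast
    show "u \<in> C" using abc by blast
    have e1: "{Y \<in> k_sets n k. Y \<inter> (A \<union> T) = T \<and> Y \<inter> B \<noteq> {} \<and> Y \<inter> C \<noteq> {}}
          \<union> {Y \<in> k_sets n k. A \<union> T \<subseteq> Y \<and> Y \<inter> (B \<union> {u}) \<noteq> {}} = F2"
    proof (rule set_eqI)
      fix Y
      show "Y \<in> {Y \<in> k_sets n k. Y \<inter> (A \<union> T) = T \<and> Y \<inter> B \<noteq> {} \<and> Y \<inter> C \<noteq> {}}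
          \<union> {Y \<in> k_sets n k. A \<union> T \<subseteq> Y \<and> Y \<inter> (B \<union> {u}) \<noteq> {}} \<longleftrightarrow> Y \<in> F2"
        unfolding F2_def W1_def W2_def W3_def A_def Tz_def Un_iff mem_Collect_eq
        by (rule dist_helper[OF fam_eq[OF aT(1,2,3) abc(9) zT, of Y]])
    qed
    have e2: "{A \<union> B, A \<union> C, T \<inter> A \<union> B \<union> {u}} = F'"
    proof -
      have "A \<union> B = Tz \<union> W1" "A \<union> C = Tz \<union> W2" "Tz \<union> B \<union> {u} = Tz \<union> W3"
        unfolding A_def W1_def W2_def W3_def by auto
      thus ?thesis unfolding F'eq TA by simp
    qed
    show "F = {Y \<in> k_sets n k. Y \<inter> (A \<union> T) = T \<and> Y \<inter> B \<noteq> {} \<and> Y \<inter> C \<noteq> {}}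
          \<union> {Y \<in> k_sets n k. A \<union> T \<subseteq> Y \<and> Y \<inter> (B \<union> {u}) \<noteq> {}}
          \<union> {A \<union> B, A \<union> C, T \<inter> A \<union> B \<union> {u}}"
      unfolding e1 e2 using Fdec .
  qed
  define V where "V = X - {a}"
  have fV: "finite V" unfolding V_def using fX by simp
  have cV: "card V = n - t - 1" unfolding V_def using cX abc(3) fX by simp
  have BV: "B \<subseteq> V" "C \<subseteq> V" unfolding V_def using abc by auto
  have VT: "V \<inter> T = {}" "a \<notin> V" "V \<subseteq> {1..n}" unfolding V_def X_def by auto
  define Fa where "Fa = {Y. Y \<subseteq> V \<and> card Y = m \<and> Y \<inter> B \<noteq> {} \<and> Y \<inter> C \<noteq> {}}"
  define Fb where "Fb = {Y. Y \<subseteq> V \<and> card Y = m - 1 \<and> Y \<inter> insert u B \<noteq> {}}"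
  have cnt: "int (card Fa) + int (card Fb) \<ge> int (m * m + m + 1) * int ((n - t - 1 - 1) choose (m - 2))
      - int m * int (2 * m * m + 1) * int ((n - t - 1 - 2) choose (m - 3))"
    using count_main[OF fV BV(1,2) abc(6) abc(4) abc(5) abc(9) m3 cV] unfolding Fa_def Fb_def .
  define I1 where "I1 = (\<lambda>Y. T \<union> Y) ` Fa"
  define I2 where "I2 = (\<lambda>Y. insert a (T \<union> Y)) ` Fb"
  have inj1: "inj_on (\<lambda>Y. T \<union> Y) Fa"
  proof (rule inj_onI)
    fix Y1 Y2 assume "Y1 \<in> Fa" "Y2 \<in> Fa" "T \<union> Y1 = T \<union> Y2"
    moreover have "Y1 = (T \<union> Y1) - T" "Y2 = (T \<union> Y2) - T" using \<open>Y1 \<in> Fa\<close> \<open>Y2 \<in> Fa\<close> VT unfolding Fa_def by auto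
    ultimately show "Y1 = Y2" by simp
  qed
  have inj2: "inj_on (\<lambda>Y. insert a (T \<union> Y)) Fb"
  proof (rule inj_onI)
    fix Y1 Y2 assume "Y1 \<in> Fb" "Y2 \<in> Fb" "insert a (T \<union> Y1) = insert a (T \<union> Y2)"
    moreover have "Y1 = insert a (T \<union> Y1) - insert a T" "Y2 = insert a (T \<union> Y2) - insert a T"
      using \<open>Y1 \<in> Fb\<close> \<open>Y2 \<in> Fb\<close> VT unfolding Fb_def by auto
    ultimately show "Y1 = Y2" by simp
  qed
  have I1sub: "I1 \<subseteq> F2"
  proof
    fix Z assume "Z \<in> I1"
    then obtain Y where Y: "Y \<in> Fa" "Z = T \<union> Y" unfolding I1_def by blast
    have Y1: "Y \<subseteq> V" "card Y = m" "Y \<inter> B \<noteq> {}" "Y \<inter> C \<noteq> {}" using Y(1) unfolding Fa_def by auto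
    have fY: "finite Y" using Y1(1) fV finite_subset by blast
    have dTY: "T \<inter> Y = {}" using Y1(1) VT by blast
    have "card Z = k" unfolding Y(2) using card_Un_disjoint[OF fT fY dTY] cT Y1(2) km by simp
    moreover have "Z \<subseteq> {1..n}" unfolding Y(2) using Tn Y1(1) VT by blast
    moreover have "Z - T = Y" unfolding Y(2) using dTY by blast
    ultimately show "Z \<in> F2" unfolding F2_def k_sets_def W1_def W2_def W3_def using Y1 Y(2) by blast
  qed
  have I2sub: "I2 \<subseteq> F2"
  proof
    fix Z assume "Z \<in> I2"
    then obtain Y where Y: "Y \<in> Fb" "Z = insert a (T \<union> Y)" unfolding I2_def by blast
    have Y1: "Y \<subseteq> V" "card Y = m - 1" "Y \<inter> insert u B \<noteq> {}" using Y(1) unfolding Fb_def by auto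
    have fY: "finite Y" using Y1(1) fV finite_subset by blast
    have dTY: "T \<inter> Y = {}" using Y1(1) VT by blast
    have aTY: "a \<notin> T \<union> Y" using aT Y1(1) VT by blast
    have "card (T \<union> Y) = t + (m - 1)" using card_Un_disjoint[OF fT fY dTY] cT Y1(2) by simp
    hence "card Z = k" unfolding Y(2) using aTY fT fY km m3 by simp
    moreover have "Z \<subseteq> {1..n}" unfolding Y(2) using Tn Y1(1) VT abc(3) unfolding X_def by blast
    moreover have "Z - T = insert a Y" unfolding Y(2) using dTY aT by blast
    ultimately show "Z \<in> F2" unfolding F2_def k_sets_def W1_def W2_def W3_def using Y1 Y(2) by blast
  qed
  have dis12: "I1 \<inter> I2 = {}"
  proof -
    have "\<forall>Z\<in>I1. a \<notin> Z" unfolding I1_def Fa_def using aT VT by blast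
    moreover have "\<forall>Z\<in>I2. a \<in> Z" unfolding I2_def by blast
    ultimately show ?thesis by blast
  qed
  have fK: "finite (k_sets n k)"
  proof -
    have "k_sets n k \<subseteq> Pow {1..n}" unfolding k_sets_def by blast
    thus ?thesis using finite_subset by blast
  qed
  have fF2: "finite F2" unfolding F2_def using fK by simp
  have fFa: "finite Fa" "finite Fb" unfolding Fa_def Fb_def using fV by simp_all
  have "card (I1 \<union> I2) \<le> card F2" using I1sub I2sub fF2 by (intro card_mono) auto
  moreover have "card (I1 \<union> I2) = card I1 + card I2"
    using dis12 fFa unfolding I1_def I2_def by (intro card_Un_disjoint) auto
  moreover have "card I1 = card Fa" unfolding I1_def using card_image[OF inj1] .
  moreover have "card I2 = card Fb" unfolding I2_def using card_image[OF inj2] .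
  ultimately have cF2: "card Fa + card Fb \<le> card F2" by linarith
  have WT: "W1 \<inter> T = {}" "W2 \<inter> T = {}" "W3 \<inter> T = {}" unfolding W1_def W2_def W3_def using aT by auto
  have dd: "(Tz \<union> W1) - T = W1" "(Tz \<union> W2) - T = W2" "(Tz \<union> W3) - T = W3"
    unfolding Tz_def using WT by auto
  have ne3: "Tz \<union> W1 \<noteq> Tz \<union> W2" "Tz \<union> W1 \<noteq> Tz \<union> W3" "Tz \<union> W2 \<noteq> Tz \<union> W3"
    using Wne dd by metis+
  have cF': "card F' = 3" unfolding F'eq using ne3 by simp
  have fF: "finite F" using FK fK finite_subset by blast
  have dF: "F2 \<inter> F' = {}" using F2eq unfolding F'_def by blast
  have cF: "card F = card F2 + card F'"
    unfolding Fdec using dF fF Fdec by (intro card_Un_disjoint) auto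
  have e1: "n - t - 1 - 1 = n - t - 2" "n - t - 1 - 2 = n - t - 3" "m - 2 = k - t - 2" "m - 3 = k - t - 3" unfolding m_def by auto
  have e2: "(k - t) * (k - t + 1) + 1 = m * m + m + 1" "2 * (k - t)^2 + 1 = 2 * m * m + 1"
    unfolding m_def by (auto simp: algebra_simps power2_eq_square)
  have "int (card F) \<ge> int (card Fa) + int (card Fb) + 3" using cF cF2 cF' by linarith
  hence "int (card F) > int (m * m + m + 1) * int ((n - t - 2) choose (k - t - 2))
      - int m * int (2 * m * m + 1) * int ((n - t - 3) choose (k - t - 3))" using cnt unfolding e1 by linarith
  thus ?thesis using typeI unfolding e2 m_def by simp
qed


end
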